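(* For each prime number $p>2$, there exists a self-similar $p$-adic fractal string $\mathcal{CS}_p\subseteq\mathbb{Z}_p$ of Minkowski--Bouligand dimension $D=\frac{\log(\frac{1+p}{2})}{\log p}$ and with oscillatory period $\mathbf{p}=\frac{2\pi}{\log p}$; that is, its geometric zeta function extends meromorphically to $\mathbb{C}$, its set of poles (complex dimensions) is exactly $\{D+\frac{2\pi i n}{\log p}: n\in\mathbb{Z}\}$, and $D$ is the abscissa of convergence of the series defining the geometric zeta function.
   Context: Let $p$ be a prime and $\mathbb{Z}_p$ the ring of $p$-adic integers with $|p|_p=p^{-1}$. A $p$-adic fractal string $\mathcal{L}$ in $\mathbb{Z}_p$ is a countable disjoint union of balls $a+p^n\mathbb{Z}_p$ ($a\in\mathbb{Z}_p$, $n\ge1$) contained in $\mathbb{Z}_p$; such a ball has length $p^{-n}$, and $\mathcal{L}$ is encoded by its sequence of lengths $l_j$ counted with multiplicity. Its geometric zeta function is $\zeta_{\mathcal{L}}(s)=\sum_j l_j^s$ for $\Re(s)$ large, meromorphically continued to $\mathbb{C}$ when possible; the complex dimensions are the poles of this continuation; the Minkowski--Bouligand dimension $D$ is the abscissa of convergence of $\sum_j l_j^s$; the oscillatory period is $\mathbf{p}>0$ if the set of complex dimensions is exactly $\{D+in\mathbf{p}:n\in\mathbb{Z}\}$. $\mathcal{L}$ is self-similar if it is the complement in $\mathbb{Z}_p$ of the unique nonempty compact set $K\subseteq\mathbb{Z}_p$ satisfying $K=\bigcup_i\phi_i(K)$ for a finite family of at least two similarity contractions $\phi_i(x)=c_i+p^{m}x$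 of $\mathbb{Z}_p$ into itself ($c_i\in\mathbb{Z}$, $m\ge1$). *)

theory Defs
  imports "HOL-Complex_Analysis.Complex_Analysis"
begin

(* p-adic integers as the inverse limit of Z/p^n Z: a p-adic integer x is the
   compatible sequence of its residues x n in {0..p^n-1}.  As a subset of
   nat => int it carries the product (of discrete spaces) topology, which is
   exactly the p-adic topology. *)
definition Zp :: "nat \<Rightarrow> (nat \<Rightarrow> int) set" where
  "Zp p = {x. \<forall>n. 0 \<le> x n \<and> x n < int p ^ n \<and> x (Suc n) mod (int p ^ n) = x n}"

definition zp_of_int :: "nat \<Rightarrow> int \<Rightarrow> (nat \<Rightarrow> int)" where
  "zp_of_int p c = (\<lambda>n. c mod (int p ^ n))"

definition zp_add :: "nat \<Rightarrow> (nat \<Rightarrow> int) \<Rightarrow> (nat \<Rightarrow> int) \<Rightarrow> (nat \<Rightarrow> int)" where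
  "zp_add p x y = (\<lambda>n. (x n + y n) mod (int p ^ n))"

definition zp_mult :: "nat \<Rightarrow> (nat \<Rightarrow> int) \<Rightarrow> (nat \<Rightarrow> int) \<Rightarrow> (nat \<Rightarrow> int)" where
  "zp_mult p x y = (\<lambda>n. (x n * y n) mod (int p ^ n))"

(* the ball a + p^n Z_p (for a in Z_p): those x with x = a mod p^n *)
definition zp_ball :: "nat \<Rightarrow> (nat \<Rightarrow> int) \<Rightarrow> nat \<Rightarrow> (nat \<Rightarrow> int) set" where
  "zp_ball p a n = {x \<in> Zp p. x n = a n}"

definition zp_sim :: "nat \<Rightarrow> int \<Rightarrow> nat \<Rightarrow> (nat \<Rightarrow> int) \<Rightarrow> (nat \<Rightarrow> int)" where
  "zp_sim p c m x = zp_add p (zp_of_int p c) (zp_mult p (zp_of_int p (int p ^ m)) x)"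

definition zp_invariant_set :: "nat \<Rightarrow> nat \<Rightarrow> int set \<Rightarrow> (nat \<Rightarrow> int) set \<Rightarrow> bool" where
  "zp_invariant_set p m C K \<longleftrightarrow>
     K \<subseteq> Zp p \<and> K \<noteq> {} \<and> compact K \<and> K = (\<Union>c\<in>C. zp_sim p c m ` K)"

definition self_similar_padic_string :: "nat \<Rightarrow> (nat \<Rightarrow> int) set \<Rightarrow> bool" where
  "self_similar_padic_string p L \<longleftrightarrow>
     (\<exists>m C K. m \<ge> 1 \<and> card C \<ge> 2 \<and> zp_invariant_set p m C K \<and>
        (\<forall>K'. zp_invariant_set p m C K' \<longrightarrow> K' = K) \<and> L = Zp p - K)"

(* number of balls of length p^(-n) (n \<ge> 1) in the canonical decomposition of the
   (open) string L into maximal balls: balls a + p^n Z_p contained in L whose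
   parent ball a + p^(n-1) Z_p is not contained in L *)
definition string_count :: "nat \<Rightarrow> (nat \<Rightarrow> int) set \<Rightarrow> nat \<Rightarrow> nat" where
  "string_count p L n = card {B. \<exists>a\<in>Zp p. B = zp_ball p a n \<and> B \<subseteq> L \<and>
                                   \<not> zp_ball p a (n - 1) \<subseteq> L}"

(* the terms of the geometric zeta function  sum_j l_j^s, grouped by length p^(-n) *)
definition geom_zeta_term :: "nat \<Rightarrow> (nat \<Rightarrow> int) set \<Rightarrow> complex \<Rightarrow> nat \<Rightarrow> complex" where
  "geom_zeta_term p L s n =
     (if n = 0 then 0
      else of_nat (string_count p L n) * (complex_of_real (1 / real p ^ n)) powr s)"

end

theory Submission
  imports Defs
begin


definition good :: "int \<Rightarrow> int \<Rightarrow> nat \<Rightarrow> int \<Rightarrow> bool" where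
  "good P k n v \<longleftrightarrow> 0 \<le> v \<and> v < P^n \<and> (\<forall>j<n. v div P^j mod P < k)"

lemma dig:
  fixes P v :: int
  assumes "P > 1" "j < m"
  shows "(v mod P^m) div P^j mod P = v div P^j mod P"
proof -
  have e: "P^m = P^j * P^(m-j)" using assms by (simp flip: power_add)
  have "v mod P^m = P^j * (v div P^j mod P^(m-j)) + v mod P^j"
    unfolding e using assms by (intro zmod_zmult2_eq) simp
  hence "(v mod P^m) div P^j = v div P^j mod P^(m-j)" using assms by simp
  moreover have "P dvd P^(m-j)" using assms by simp
  ultimately show ?thesis by (simp add: mod_mod_cancel)
qed

lemma zdiv_less_iff:
  fixes m q n :: int
  assumes "q > 0" "m \<ge> 0"
  shows "m div q < n \<longleftrightarrow> m < n * q"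
  by (smt (verit, del_insts) assms(1) minus_mult_div_eq_mod mult.commute
    nonzero_mult_div_cancel_right pos_mod_sign zdiv_mono1)

lemma all_less_Suc: "(\<forall>j<Suc n. Q j) \<longleftrightarrow> Q 0 \<and> (\<forall>j<n. Q (Suc j))"
  by (auto simp: less_Suc_eq_0_disj)

lemma good_Suc:
  fixes P k v :: int
  assumes "P > 1"
  shows "good P k (Suc n) v \<longleftrightarrow> 0 \<le> v \<and> v mod P < k \<and> good P k n (v div P)"
proof -
  have d: "v div P^(Suc j) = v div P div P^j" for j
    using assms by (simp add: zdiv_zmult2_eq)
  have r: "0 \<le> v \<Longrightarrow> v < P^Suc n \<longleftrightarrow> v div P < P^n"
    using assms zdiv_less_iff[of P v "P^n"] by (simp add: mult.commute)
  have "(\<forall>j<Suc n. v div P^j mod P < k) \<longleftrightarrow> v mod P < k \<and> (\<forall>j<n. v div P div P^j mod P < k)"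
    unfolding all_less_Suc d by simp
  thus ?thesis unfolding good_def using r assms
    by (auto simp: pos_imp_zdiv_nonneg_iff)
qed

lemma good_mod:
  fixes P k v :: int
  assumes "P > 1" "good P k n v" "m \<le> n"
  shows "good P k m (v mod P^m)"
  using assms dig[OF assms(1)] unfolding good_def by auto

lemma good_mono:
  fixes P k v :: int
  assumes "P > 1" "good P k n v" "n \<le> m" "k > 0"
  shows "good P k m v"
proof -
  have "v div P^j mod P < k" if "j < m" for j
  proof (cases "j < n")
    case True thus ?thesis using assms by (auto simp: good_def)
  next
    case False
    hence "P^n \<le> P^j" using assms by (intro power_increasing) auto
    hence "v < P^j" using assms(2) unfolding good_def by linarith
    hence "v div P^j = 0" using assms(2) unfolding good_def by (intro div_pos_pos_trivial) auto
    thus ?thesis using assms by simp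
  qed
  moreover have "P^n \<le> P^m" using assms by (intro power_increasing) auto
  hence "v < P^m" using assms(2) unfolding good_def by linarith
  ultimately show ?thesis using assms(2) by (auto simp: good_def)
qed

lemma good_top:
  fixes P k v :: int
  assumes "P > 1" "0 \<le> v" "v < P^Suc n" "good P k n (v mod P^n)"
  shows "good P k (Suc n) v \<longleftrightarrow> v div P^n < k"
proof -
  have "v div P^n < P" using assms zdiv_less_iff[of "P^n" v P] by (simp add: mult.commute)
  hence t: "v div P^n mod P = v div P^n" using assms by (simp add: pos_imp_zdiv_nonneg_iff)
  have "v div P^j mod P < k" if "j < n" for j
    using assms that dig[OF assms(1) that, of v] by (auto simp: good_def)
  thus ?thesis using assms t by (auto simp: good_def less_Suc_eq)
qed

lemma good_Suc_set:
  fixes P k :: int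
  assumes "P > 1" "k \<le> P"
  shows "{v. good P k (Suc n) v} = (\<lambda>(c,t). c + P*t) ` ({0..<k} \<times> {v. good P k n v})"
proof safe
  fix v assume "good P k (Suc n) v"
  hence g: "0 \<le> v" "v mod P < k" "good P k n (v div P)" using good_Suc[OF assms(1)] by auto
  have "v = v mod P + P * (v div P)" by simp
  moreover have "v mod P \<ge> 0" using assms by simp
  ultimately show "v \<in> (\<lambda>(c,t). c + P*t) ` ({0..<k} \<times> {v. good P k n v})"
    using g by (intro image_eqI[of _ _ "(v mod P, v div P)"]) auto
next
  fix c t assume c: "c \<in> {0..<k}" and t: "good P k n t"
  have t0: "t \<ge> 0" using t by (simp add: good_def)
  have m: "(c + P*t) mod P = c" using c assms by simp
  have d: "(c + P*t) div P = t" using c assms by simp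
  show "good P k (Suc n) (c + P*t)"
    unfolding good_Suc[OF assms(1)] m d using c t t0 assms by auto
qed

lemma card_good:
  fixes P k :: int
  assumes "P > 1" "0 \<le> k" "k \<le> P"
  shows "finite {v. good P k n v} \<and> card {v. good P k n v} = nat k ^ n"
proof (induction n)
  case 0
  have "{v. good P k 0 v} = {0}" by (auto simp: good_def)
  thus ?case by simp
next
  case (Suc n)
  have inj: "inj_on (\<lambda>(c,t). c + P*t) ({0..<k} \<times> {v. good P k n v})"
  proof (rule inj_onI, clarsimp)
    fix c t c' t' assume h: "0 \<le> c" "c < k" "0 \<le> c'" "c' < k" and e: "c + P*t = c' + P*t'"
    have "(c + P*t) mod P = c" "(c' + P*t') mod P = c'"
      "(c + P*t) div P = t" "(c' + P*t') div P = t'" using h assms by auto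
    thus "c = c' \<and> t = t'" using e by metis
  qed
  show ?case unfolding good_Suc_set[OF assms(1,3)]
    using Suc card_image[OF inj] by (simp add: card_cartesian_product)
qed

lemma divmod_digit:
  fixes Q u d :: int
  assumes "0 \<le> u" "u < Q"
  shows "(u + Q*d) div Q = d" "(u + Q*d) mod Q = u"
proof -
  have Q0: "Q \<noteq> 0" using assms by linarith
  have "(u + Q*d) div Q = d + u div Q" using div_mult_self2[OF Q0] .
  moreover have "u div Q = 0" using assms by (intro div_pos_pos_trivial) auto
  ultimately show "(u + Q*d) div Q = d" by simp
  show "(u + Q*d) mod Q = u" using assms by simp
qed

lemma card_top:
  fixes P k :: int
  assumes "P > 1" "0 \<le> k" "k \<le> P"
  shows "finite {v. 0 \<le> v \<and> v < P^Suc n \<and> good P k n (v mod P^n) \<and> \<not> v div P^n < k} \<and>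
    card {v. 0 \<le> v \<and> v < P^Suc n \<and> good P k n (v mod P^n) \<and> \<not> v div P^n < k} = nat k ^ n * nat (P - k)"
proof -
  let ?T = "{v. 0 \<le> v \<and> v < P^Suc n \<and> good P k n (v mod P^n) \<and> \<not> v div P^n < k}"
  let ?f = "\<lambda>(u,d). u + P^n*d"
  have Pn: "P^n > 0" using assms by simp
  have T: "?T = ?f ` ({v. good P k n v} \<times> {k..<P})"
  proof (intro equalityI subsetI)
    fix v assume "v \<in> ?T"
    hence v: "0 \<le> v" "v < P^Suc n" "good P k n (v mod P^n)" "\<not> v div P^n < k" by auto
    have "v div P^n < P" using v Pn zdiv_less_iff[of "P^n" v P] by (simp add: mult.commute)
    moreover have "v = v mod P^n + P^n * (v div P^n)" by simp
    ultimately show "v \<in> ?f ` ({v. good P k n v} \<times> {k..<P})"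
      using v by (intro image_eqI[of _ _ "(v mod P^n, v div P^n)"]) auto
  next
    fix x assume "x \<in> ?f ` ({v. good P k n v} \<times> {k..<P})"
    then obtain u d where u: "good P k n u" and d: "d \<in> {k..<P}" and x: "x = u + P^n*d" by auto
    have u0: "0 \<le> u" "u < P^n" using u by (auto simp: good_def)
    have m: "(u + P^n*d) mod P^n = u" using u0 by simp
    have Pn0: "P^n \<noteq> 0" using Pn by linarith
    have "(u + P^n*d) div P^n = d + u div P^n" using div_mult_self2[OF Pn0] .
    moreover have "u div P^n = 0" using u0 by (intro div_pos_pos_trivial) auto
    ultimately have dd: "(u + P^n*d) div P^n = d" by simp
    have "u + P^n*d < P^n + P^n*d" using u0 by simp
    also have "\<dots> = P^n * (d+1)" by (simp add: algebra_simps)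
    also have "\<dots> \<le> P^n * P" using d Pn by (intro mult_left_mono) auto
    finally have lt: "u + P^n*d < P^Suc n" by (simp add: mult.commute)
    have "0 \<le> P^n*d" using d assms Pn by simp
    thus "x \<in> ?T" unfolding x using u0 lt m dd u d by auto
  qed
  have inj: "inj_on ?f ({v. good P k n v} \<times> {k..<P})"
  proof (rule inj_onI, clarsimp)
    fix u d u' d' assume "good P k n u" "good P k n u'" "u + P^n*d = u' + P^n*d'"
    moreover have "0 \<le> u" "u < P^n" "0 \<le> u'" "u' < P^n" using calculation by (auto simp: good_def)
    moreover have "(u + P^n*d) mod P^n = u" "(u' + P^n*d') mod P^n = u'"
      "(u + P^n*d) div P^n = d" "(u' + P^n*d') div P^n = d'" using calculation(4-7)
      by (auto simp: divmod_digit)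
    ultimately show "u = u' \<and> d = d'" by metis
  qed
  show ?thesis unfolding T using card_image[OF inj] card_good[OF assms, of n]
    by (simp add: card_cartesian_product)
qed



definition Kset :: "nat \<Rightarrow> nat \<Rightarrow> (nat \<Rightarrow> int) set" where
  "Kset p k = {x \<in> Zp p. \<forall>n. good (int p) (int k) n (x n)}"

lemma Zp_0: 
  assumes "x \<in> Zp p" shows "x 0 = 0"
proof -
  have "0 \<le> x 0 \<and> x 0 < int p ^ 0" using assms unfolding Zp_def by blast
  thus ?thesis by simp
qed

lemma Zp_mod:
  assumes "x \<in> Zp p" "m \<le> n"
  shows "x n mod (int p)^m = x m"
  using assms(2)
proof (induction n)
  case 0 thus ?case using Zp_0[OF assms(1)] by simp
next
  case (Suc n)
  show ?case
  proof (cases "m = Suc n")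
    case True
    have "0 \<le> x (Suc n) \<and> x (Suc n) < int p ^ Suc n" using assms(1) unfolding Zp_def by blast
    thus ?thesis using True by simp
  next
    case False
    hence mn: "m \<le> n" using Suc by simp
    have "(int p)^m dvd (int p)^n" using mn by (simp add: le_imp_power_dvd)
    hence "x (Suc n) mod (int p)^m = x (Suc n) mod (int p)^n mod (int p)^m"
      by (simp add: mod_mod_cancel)
    also have "\<dots> = x n mod (int p)^m" using assms(1) by (simp add: Zp_def)
    finally show ?thesis using Suc mn by simp
  qed
qed

lemma zp_of_int_Zp: "p > 0 \<Longrightarrow> zp_of_int p v \<in> Zp p"
  unfolding Zp_def zp_of_int_def
  by (auto simp: mod_mod_cancel le_imp_power_dvd)

lemma sim_eq: "zp_sim p c 1 y n = (c + int p * y n) mod (int p)^n"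
  unfolding zp_sim_def zp_add_def zp_mult_def zp_of_int_def
  by (simp add: mod_add_eq mod_mult_left_eq)

lemma sim_eq1: "zp_sim p c (Suc 0) y n = (c + int p * y n) mod (int p)^n"
  using sim_eq[of p c y n] by simp

lemma key_mod:
  assumes "y \<in> Zp p" "p > 0"
  shows "(int p * y n) mod (int p)^n = int p * y (n - 1)"
proof (cases n)
  case 0 thus ?thesis using Zp_0[OF assms(1)] by simp
next
  case (Suc m)
  have "(int p * y n) mod (int p * (int p)^m) = int p * (y n mod (int p)^m)"
    by (rule mod_mult_mult1)
  thus ?thesis using Zp_mod[OF assms(1), of m n] Suc by simp
qed

lemma sim_val:
  assumes "y \<in> Zp p" "p > 0" "0 \<le> c" "c < int p"
  shows "zp_sim p c 1 y (Suc m) = c + int p * y m"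
proof -
  have "zp_sim p c 1 y (Suc m) = (c + int p * y (Suc m) mod (int p)^Suc m) mod (int p)^Suc m"
    by (simp only: sim_eq mod_add_right_eq)
  also have "\<dots> = (c + int p * y m) mod (int p)^Suc m"
    using key_mod[OF assms(1,2), of "Suc m"] by (simp only: diff_Suc_1)
  also have "\<dots> = c + int p * y m"
  proof -
    have y: "0 \<le> y m" "y m < (int p)^m" using assms(1) by (auto simp: Zp_def)
    hence "y m \<le> (int p)^m - 1" by simp
    hence "int p * y m \<le> int p * ((int p)^m - 1)" using assms by (intro mult_left_mono) auto
    hence "c + int p * y m < (int p)^Suc m" using assms by (simp add: algebra_simps)
    moreover have "0 \<le> c + int p * y m" using y assms by simp
    ultimately show ?thesis by simp
  qed
  finally show ?thesis .
qed

lemma sim_0: "zp_sim p c 1 y 0 = 0"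
  unfolding sim_eq by simp

lemma sim_Zp:
  assumes "y \<in> Zp p" "p > 0"
  shows "zp_sim p c 1 y \<in> Zp p"
proof -
  have "zp_sim p c 1 y (Suc n) mod (int p)^n = zp_sim p c 1 y n" for n
  proof -
    have "zp_sim p c 1 y (Suc n) mod (int p)^n = (c + int p * y (Suc n)) mod (int p)^n"
      unfolding sim_eq by (simp add: mod_mod_cancel)
    also have "\<dots> = (c + int p * y (Suc n) mod (int p)^n) mod (int p)^n"
      by (simp add: mod_add_right_eq)
    also have "int p * y (Suc n) mod (int p)^n = int p * y n mod (int p)^n"
    proof (cases n)
      case 0 thus ?thesis by simp
    next
      case (Suc m)
      have "int p * y (Suc n) mod (int p * (int p)^m) = int p * (y (Suc n) mod (int p)^m)"
        "int p * y n mod (int p * (int p)^m) = int p * (y n mod (int p)^m)"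
        by (rule mod_mult_mult1)+
      moreover have "y (Suc n) mod (int p)^m = y m" "y n mod (int p)^m = y m"
        using Zp_mod[OF assms(1)] Suc by auto
      ultimately show ?thesis using Suc by simp
    qed
    also have "(c + int p * y n mod (int p)^n) mod (int p)^n = zp_sim p c 1 y n"
      unfolding sim_eq by (simp add: mod_add_right_eq)
    finally show ?thesis .
  qed
  moreover have "0 \<le> zp_sim p c 1 y n \<and> zp_sim p c 1 y n < int p ^ n" for n
    unfolding sim_eq using assms by simp
  ultimately show ?thesis unfolding Zp_def by blast
qed

lemma div_mod_shift:
  fixes a P :: int
  assumes "P > 0"
  shows "(a div P) mod P^n = (a mod (P * P^n)) div P"
proof -
  have "a mod (P * P^n) = P * (a div P mod P^n) + a mod P" using assms by (intro zmod_zmult2_eq) simp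
  hence "(a mod (P * P^n)) div P = (a mod P + P * (a div P mod P^n)) div P" by (simp add: add.commute)
  also have "\<dots> = a div P mod P^n" using assms by (intro divmod_digit) auto
  finally show ?thesis by simp
qed

lemma sim_K:
  assumes "p > 1" "y \<in> Kset p k" "0 \<le> c" "c < int k" "k \<le> p"
  shows "zp_sim p c 1 y \<in> Kset p k"
proof -
  have y: "y \<in> Zp p" "\<And>n. good (int p) (int k) n (y n)" using assms by (auto simp: Kset_def)
  have "good (int p) (int k) n (zp_sim p c 1 y n)" for n
  proof (cases n)
    case 0 thus ?thesis using sim_0[of p c y] by (simp add: good_def)
  next
    case (Suc m)
    have y0: "0 \<le> y m" using y(2)[of m] by (simp add: good_def)
    have cp: "c < int p" using assms by simp
    have "zp_sim p c 1 y n = c + int p * y m" using sim_val[OF y(1) _ assms(3) cp] Suc assms by simp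
    moreover have "(c + int p * y m) mod int p = c" "(c + int p * y m) div int p = y m"
      using divmod_digit[OF assms(3) cp] by auto
    ultimately show ?thesis unfolding Suc good_Suc[of "int p", OF _] using assms y0 y(2)[of m]
      by (simp add: good_Suc)
  qed
  thus ?thesis using sim_Zp[OF y(1)] assms by (auto simp: Kset_def)
qed

lemma K_inv:
  assumes "p > 1" "k \<le> p"
  shows "Kset p k = (\<Union>c\<in>{0..<int k}. zp_sim p c 1 ` Kset p k)"
proof (intro equalityI subsetI)
  fix x assume "x \<in> (\<Union>c\<in>{0..<int k}. zp_sim p c 1 ` Kset p k)"
  thus "x \<in> Kset p k" using sim_K[OF assms(1) _ _ _ assms(2)] by auto
next
  fix x assume x: "x \<in> Kset p k"
  have xz: "x \<in> Zp p" and g: "\<And>n. good (int p) (int k) n (x n)" using x by (auto simp: Kset_def)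
  let ?P = "int p"
  define y where "y = (\<lambda>n. x (Suc n) div ?P)"
  have gy: "good ?P (int k) n (y n)" for n using g[of "Suc n"] good_Suc[of ?P] assms by (simp add: y_def)
  have yZ: "y \<in> Zp p"
  proof -
    have "y (Suc n) mod ?P^n = y n" for n
    proof -
      have "y (Suc n) mod ?P^n = (x (Suc (Suc n)) mod (?P * ?P^n)) div ?P"
        unfolding y_def using assms by (intro div_mod_shift) simp
      also have "x (Suc (Suc n)) mod (?P * ?P^n) = x (Suc n)"
        using Zp_mod[OF xz, of "Suc n" "Suc (Suc n)"] by simp
      finally show ?thesis by (simp add: y_def)
    qed
    thus ?thesis using gy unfolding Zp_def good_def by auto
  qed
  have yK: "y \<in> Kset p k" using yZ gy by (simp add: Kset_def)
  have g1: "good ?P (int k) 1 (x 1)" using g .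
  hence c: "0 \<le> x 1" "x 1 < int k" "x 1 < ?P" using assms by (auto simp: good_def)
  have "x = zp_sim p (x 1) 1 y"
  proof
    fix n show "x n = zp_sim p (x 1) 1 y n"
    proof (cases n)
      case 0 thus ?thesis using Zp_0[OF xz] by (simp add: sim_eq1)
    next
      case (Suc m)
      have "zp_sim p (x 1) 1 y n = x 1 + ?P * (x (Suc m) div ?P)"
        using sim_val[OF yZ _ c(1) c(3)] assms Suc by (simp add: y_def)
      moreover have "x (Suc m) mod ?P = x 1" using Zp_mod[OF xz, of 1 "Suc m"] by simp
      ultimately show ?thesis using Suc by (metis add.commute mult_div_mod_eq)
    qed
  qed
  thus "x \<in> (\<Union>c\<in>{0..<int k}. zp_sim p c 1 ` Kset p k)" using yK c by auto
qed

lemma K_sub: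
  assumes "p > 1" "zp_invariant_set p 1 {0..<int k} K'" "k \<le> p"
  shows "K' \<subseteq> Kset p k"
proof -
  have Z: "K' \<subseteq> Zp p" and E: "K' = (\<Union>c\<in>{0..<int k}. zp_sim p c 1 ` K')"
    using assms by (auto simp: zp_invariant_set_def)
  have "\<forall>x\<in>K'. good (int p) (int k) n (x n)" for n
  proof (induction n)
    case 0 show ?case
    proof
      fix x assume "x \<in> K'"
      hence "x 0 = 0" using Z Zp_0 by blast
      thus "good (int p) (int k) 0 (x 0)" by (simp add: good_def)
    qed
  next
    case (Suc n)
    show ?case
    proof
      fix x assume xK: "x \<in> K'"
      have "x \<in> (\<Union>c\<in>{0..<int k}. zp_sim p c 1 ` K')" by (subst E[symmetric]) (rule xK)
      then obtain c y where c: "0 \<le> c" "c < int k" and y: "y \<in> K'" and xe: "x = zp_sim p c 1 y"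
        by auto
      have "good (int p) (int k) n (y n)" using Suc y by blast
      hence "0 \<le> y n" by (simp add: good_def)
      have cp: "c < int p" using c assms by simp
      have "x (Suc n) = c + int p * y n" unfolding xe
        using sim_val[OF _ _ c(1) cp] y Z assms by auto
      moreover have "(c + int p * y n) mod int p = c" "(c + int p * y n) div int p = y n"
        using divmod_digit[OF c(1) cp] by auto
      ultimately show "good (int p) (int k) (Suc n) (x (Suc n))"
        using good_Suc[of "int p"] assms c \<open>0 \<le> y n\<close> \<open>good (int p) (int k) n (y n)\<close> by simp
    qed
  qed
  thus ?thesis using Z by (auto simp: Kset_def)
qed


lemma K_approx:
  assumes "p > 1" "zp_invariant_set p 1 {0..<int k} K'" "k \<le> p"
  shows "good (int p) (int k) n v \<Longrightarrow> \<exists>z\<in>K'. z n = v"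
proof (induction n arbitrary: v)
  have Z: "K' \<subseteq> Zp p" and ne: "K' \<noteq> {}" and E: "K' = (\<Union>c\<in>{0..<int k}. zp_sim p c 1 ` K')"
    using assms by (auto simp: zp_invariant_set_def)
  {
    case 0
    hence "v = 0" by (simp add: good_def)
    moreover obtain z where "z \<in> K'" using ne by blast
    ultimately show ?case using Z Zp_0 by blast
  next
    case (Suc n)
    let ?P = "int p"
    have g: "0 \<le> v" "v mod ?P < int k" "good ?P (int k) n (v div ?P)"
      using Suc.prems good_Suc[of ?P] assms by auto
    obtain z where z: "z \<in> K'" "z n = v div ?P" using Suc.IH[OF g(3)] by blast
    have c0: "0 \<le> v mod ?P" using assms by simp
    have cp: "v mod ?P < ?P" using assms by simp
    have "zp_sim p (v mod ?P) 1 z \<in> (\<Union>c\<in>{0..<int k}. zp_sim p c 1 ` K')" using z g c0 by auto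
    hence "zp_sim p (v mod ?P) 1 z \<in> K'" using E by blast
    moreover have "zp_sim p (v mod ?P) 1 z (Suc n) = v"
      using sim_val[OF _ _ c0 cp] z Z assms by auto
    ultimately show ?case by blast
  }
qed

lemma Hausdorff_int: "Hausdorff_space (euclidean :: int topology)"
  unfolding Hausdorff_space_def by (metis disjnt_def hausdorff open_openin)

lemma Hausdorff_fun: "Hausdorff_space (euclidean :: (nat \<Rightarrow> int) topology)"
  unfolding euclidean_product_topology[symmetric] Hausdorff_space_product_topology
  using Hausdorff_int by blast

lemma compact_closed_fun: "compact (S :: (nat \<Rightarrow> int) set) \<Longrightarrow> closed S"
  unfolding closed_closedin compactin_euclidean_iff[symmetric]
  by (rule compactin_imp_closedin[OF Hausdorff_fun])

lemma Kset_sub: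
  assumes "p > 1" "zp_invariant_set p 1 {0..<int k} K'" "k \<le> p"
  shows "Kset p k \<subseteq> K'"
proof
  fix x assume x: "x \<in> Kset p k"
  have xz: "x \<in> Zp p" and g: "\<And>n. good (int p) (int k) n (x n)" using x by (auto simp: Kset_def)
  have Z: "K' \<subseteq> Zp p" and cK: "compact K'" using assms by (auto simp: zp_invariant_set_def)
  have "\<exists>z\<in>K'. z n = x n" for n using K_approx[OF assms g] .
  then obtain z where z: "\<And>n. z n \<in> K'" "\<And>n. z n n = x n" by metis
  have zm: "z n m = x m" if "m \<le> n" for n m
  proof -
    have zn: "z n \<in> Zp p" using z(1) Z by blast
    have "z n m = z n n mod (int p)^m" using Zp_mod[OF zn that] by simp
    also have "\<dots> = x m" using Zp_mod[OF xz that] z by simp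
    finally show ?thesis .
  qed
  have "z \<longlonglongrightarrow> x"
  proof -
    have "limitin (product_topology (\<lambda>i. euclidean) UNIV) z x sequentially"
      unfolding limitin_componentwise
    proof (intro conjI ballI)
      fix i :: nat
      have "eventually (\<lambda>n. z n i = x i) sequentially"
        using zm unfolding eventually_sequentially by blast
      hence "(\<lambda>n. z n i) \<longlonglongrightarrow> x i" by (rule tendsto_eventually)
      thus "limitin euclidean (\<lambda>c. z c i) (x i) sequentially" by simp
    qed auto
    thus ?thesis unfolding euclidean_product_topology by simp
  qed
  moreover have "closed K'" using cK by (rule compact_closed_fun)
  ultimately show "x \<in> K'" using z(1) closed_sequentially by blast
qed


lemma cont_coord: "continuous_on UNIV (\<lambda>x::nat\<Rightarrow>int. h (x i) :: int)"
proof -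
  have "continuous_on UNIV (h \<circ> (\<lambda>x::nat\<Rightarrow>int. x i))"
    by (rule continuous_on_compose) simp_all
  thus ?thesis by (simp add: o_def)
qed

lemma closed_coord: "closed {x::nat\<Rightarrow>int. x i \<in> A}"
proof -
  have "closed {x::nat\<Rightarrow>int. (if x i \<in> A then 1 else 0::int) = (\<lambda>_. 1) x}"
    by (rule closed_Collect_eq) (use cont_coord[of "\<lambda>v. if v \<in> A then 1 else 0"] in auto)
  moreover have "{x::nat\<Rightarrow>int. (if x i \<in> A then 1 else 0::int) = (\<lambda>_. 1) x} = {x. x i \<in> A}"
    by auto
  ultimately show ?thesis by simp
qed

lemma closed_coord2: "closed {x::nat\<Rightarrow>int. x (Suc n) mod Q = x n}"
  by (rule closed_Collect_eq) (use cont_coord[of "\<lambda>v. v mod Q"] cont_coord[of "\<lambda>v. v"] in auto)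

lemma compact_K:
  assumes "p > 1"
  shows "compact (Kset p k)"
proof -
  define B where "B = PiE UNIV (\<lambda>n. {0..<(int p)^n})"
  have "compactin (product_topology (\<lambda>i. euclidean) UNIV) B"
    unfolding B_def compactin_PiE by (auto intro: finite_imp_compact)
  hence cB: "compact B" unfolding euclidean_product_topology by simp
  have KB: "Kset p k = B \<inter> (\<Inter>n. {x. x n \<in> {v. good (int p) (int k) n v}} \<inter> {x. x (Suc n) mod (int p)^n = x n})"
    unfolding Kset_def B_def Zp_def by (auto simp: good_def)
  have "closed (\<Inter>n. {x. x n \<in> {v. good (int p) (int k) n v}} \<inter> {x. x (Suc n) mod (int p)^n = x n})"
    by (intro closed_INT ballI closed_Int closed_coord closed_coord2)
  thus ?thesis unfolding KB using cB by (rule compact_Int_closed[rotated])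
qed


lemma ball_sub_L:
  assumes "p > 1" "0 < k" "a \<in> Zp p"
  shows "zp_ball p a n \<subseteq> Zp p - Kset p k \<longleftrightarrow> \<not> good (int p) (int k) n (a n)"
proof
  assume sub: "zp_ball p a n \<subseteq> Zp p - Kset p k"
  show "\<not> good (int p) (int k) n (a n)"
  proof
    assume g: "good (int p) (int k) n (a n)"
    let ?z = "zp_of_int p (a n)"
    have zZ: "?z \<in> Zp p" using assms by (simp add: zp_of_int_Zp)
    have an: "0 \<le> a n" "a n < (int p)^n" using g by (auto simp: good_def)
    have zn: "?z n = a n" using an by (simp add: zp_of_int_def)
    have "good (int p) (int k) m (?z m)" for m
    proof (cases "m \<le> n")
      case True thus ?thesis using good_mod[OF _ g True] assms by (simp add: zp_of_int_def)
    next
      case False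
      hence "(int p)^n \<le> (int p)^m" using assms by (intro power_increasing) auto
      hence "a n mod (int p)^m = a n" using an by simp
      thus ?thesis using good_mono[OF _ g, of m] False assms by (simp add: zp_of_int_def)
    qed
    hence "?z \<in> Kset p k" using zZ by (simp add: Kset_def)
    moreover have "?z \<in> zp_ball p a n" using zZ zn by (simp add: zp_ball_def)
    ultimately show False using sub by blast
  qed
next
  assume ng: "\<not> good (int p) (int k) n (a n)"
  show "zp_ball p a n \<subseteq> Zp p - Kset p k"
    using ng by (auto simp: zp_ball_def Kset_def) metis
qed

lemma string_count_eq:
  assumes "p > 1" "0 < k" "k \<le> p"
  shows "string_count p (Zp p - Kset p k) (Suc m) = k^m * (p - k)"
proof -
  let ?P = "int p" and ?k = "int k"
  let ?L = "Zp p - Kset p k"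
  let ?T = "{v. 0 \<le> v \<and> v < ?P^Suc m \<and> good ?P ?k m (v mod ?P^m) \<and> \<not> v div ?P^m < ?k}"
  let ?f = "\<lambda>v. zp_ball p (zp_of_int p v) (Suc m)"
  have P1: "?P > 1" using assms by simp
  have ballv: "zp_ball p a n = zp_ball p b n" if "a n = b n" for a b n
    using that by (simp add: zp_ball_def)
  have S: "{B. \<exists>a\<in>Zp p. B = zp_ball p a (Suc m) \<and> B \<subseteq> ?L \<and> \<not> zp_ball p a (Suc m - 1) \<subseteq> ?L}
      = ?f ` ?T"
  proof (intro equalityI subsetI)
    fix B assume "B \<in> {B. \<exists>a\<in>Zp p. B = zp_ball p a (Suc m) \<and> B \<subseteq> ?L \<and> \<not> zp_ball p a (Suc m - 1) \<subseteq> ?L}"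
    then obtain a where a: "a \<in> Zp p" "B = zp_ball p a (Suc m)" "zp_ball p a (Suc m) \<subseteq> ?L"
      "\<not> zp_ball p a m \<subseteq> ?L" by auto
    have g1: "\<not> good ?P ?k (Suc m) (a (Suc m))" using a ball_sub_L[OF assms(1,2) a(1)] by blast
    have g0: "good ?P ?k m (a m)" using a ball_sub_L[OF assms(1,2) a(1)] by blast
    have r: "0 \<le> a (Suc m)" "a (Suc m) < ?P^Suc m" using a(1) unfolding Zp_def by blast+
    have am: "a (Suc m) mod ?P^m = a m" using Zp_mod[OF a(1), of m "Suc m"] by simp
    have "a (Suc m) \<in> ?T" using g1 g0 r am good_top[OF P1 r, of ?k] by auto
    moreover have "B = ?f (a (Suc m))" unfolding a(2) using r
      by (intro ballv) (simp add: zp_of_int_def)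
    ultimately show "B \<in> ?f ` ?T" by blast
  next
    fix B assume "B \<in> ?f ` ?T"
    then obtain v where v: "v \<in> ?T" "B = ?f v" by blast
    let ?a = "zp_of_int p v"
    have aZ: "?a \<in> Zp p" using assms by (simp add: zp_of_int_Zp)
    have r: "0 \<le> v" "v < ?P^Suc m" using v by auto
    have a1: "?a (Suc m) = v" using r by (simp add: zp_of_int_def)
    have a0: "?a m = v mod ?P^m" by (simp add: zp_of_int_def)
    have "\<not> good ?P ?k (Suc m) v" using v good_top[OF P1 r, of ?k] by auto
    hence "B \<subseteq> ?L" using ball_sub_L[OF assms(1,2) aZ, of "Suc m"] a1 v by simp
    moreover have "\<not> zp_ball p ?a m \<subseteq> ?L" using ball_sub_L[OF assms(1,2) aZ, of m] a0 v by simp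
    ultimately show "B \<in> {B. \<exists>a\<in>Zp p. B = zp_ball p a (Suc m) \<and> B \<subseteq> ?L \<and> \<not> zp_ball p a (Suc m - 1) \<subseteq> ?L}"
      using aZ v by auto
  qed
  have inj: "inj_on ?f ?T"
  proof (rule inj_onI)
    fix v w assume v: "v \<in> ?T" and w: "w \<in> ?T" and e: "?f v = ?f w"
    have "zp_of_int p v \<in> ?f v" using assms v by (simp add: zp_ball_def zp_of_int_Zp)
    hence "zp_of_int p v \<in> ?f w" using e by simp
    hence "v mod ?P^Suc m = w mod ?P^Suc m" by (simp add: zp_ball_def zp_of_int_def)
    thus "v = w" using v w by simp
  qed
  have "string_count p ?L (Suc m) = card ?T"
    unfolding string_count_def S using card_image[OF inj] by simp
  also have "\<dots> = nat ?k ^ m * nat (?P - ?k)" using card_top[OF P1, of ?k m] assms by simp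
  also have "\<dots> = k^m * (p - k)" using assms by (simp add: nat_diff_distrib)
  finally show ?thesis .
qed



lemma powr_term:
  assumes "p > (0::nat)"
  shows "(complex_of_real (1 / real p ^ n)) powr s = exp (- s * of_real (ln (real p))) ^ n"
proof -
  have ne: "complex_of_real (1 / real p ^ n) \<noteq> 0" using assms by simp
  have l1: "ln (complex_of_real (1 / real p ^ n)) = complex_of_real (ln (1 / real p ^ n))"
    by (rule Ln_of_real) (use assms in simp)
  have l2: "ln (1 / real p ^ n) = - (real n * ln (real p))"
    using assms by (simp add: ln_div ln_realpow)
  have "(complex_of_real (1 / real p ^ n)) powr s = exp (s * of_real (- (real n * ln (real p))))"
    unfolding powr_def l1 l2 using ne by simp
  also have "\<dots> = exp (of_nat n * (- s * of_real (ln (real p))))" by (simp add: algebra_simps)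
  also have "\<dots> = exp (- s * of_real (ln (real p))) ^ n" by (rule exp_of_nat_mult)
  finally show ?thesis .
qed

lemma g_zero_iff:
  assumes "Lp > 0" "k > (0::nat)"
  shows "exp (z * of_real Lp) - of_nat k = 0 \<longleftrightarrow>
     (\<exists>n::int. z = complex_of_real (ln (real k) / Lp) + complex_of_real (2*pi) * \<i> * of_int n / complex_of_real Lp)"
proof -
  have ek: "of_nat k = exp (complex_of_real (ln (real k)))"
    by (subst exp_of_real) (use assms in simp)
  have "exp (z * of_real Lp) - of_nat k = 0 \<longleftrightarrow> exp (z * of_real Lp) = exp (complex_of_real (ln (real k)))"
    using ek by simp
  also have "\<dots> \<longleftrightarrow> (\<exists>n::int. z * of_real Lp = complex_of_real (ln (real k)) + complex_of_real (real_of_int (2 * n) * pi) * \<i>)"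
    by (rule exp_eq)
  also have "\<dots> \<longleftrightarrow> (\<exists>n::int. z = complex_of_real (ln (real k) / Lp) + complex_of_real (2*pi) * \<i> * of_int n / complex_of_real Lp)"
  proof -
    have "z * of_real Lp = complex_of_real (ln (real k)) + complex_of_real (real_of_int (2 * n) * pi) * \<i> \<longleftrightarrow>
          z = complex_of_real (ln (real k) / Lp) + complex_of_real (2*pi) * \<i> * of_int n / complex_of_real Lp" for n
      using assms by (auto simp: field_simps)
    thus ?thesis by simp
  qed
  finally show ?thesis .
qed

lemma g_eventually:
  fixes z0 :: complex and Lp :: real
  assumes "Lp > 0" "k > (0::nat)" "exp (z0 * of_real Lp) - of_nat k = 0"
  shows "eventually (\<lambda>z. exp (z * of_real Lp) - of_nat k \<noteq> 0) (at z0)"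
  unfolding eventually_at
proof (intro exI[of _ "2 * pi / Lp"] conjI allI impI ballI)
  show "2 * pi / Lp > 0" using assms by simp
  fix z assume z: "z \<noteq> z0 \<and> dist z z0 < 2 * pi / Lp"
  show "exp (z * of_real Lp) - of_nat k \<noteq> 0"
  proof
    assume "exp (z * of_real Lp) - of_nat k = 0"
    hence "exp (z * of_real Lp) = exp (z0 * of_real Lp)" using assms by simp
    then obtain n :: int where n: "z * of_real Lp = z0 * of_real Lp + complex_of_real (real_of_int (2 * n) * pi) * \<i>"
      using exp_eq by blast
    have "n \<noteq> 0" using n z assms by auto
    hence n1: "1 \<le> \<bar>real_of_int n\<bar>" by linarith
    have "(z - z0) * of_real Lp = complex_of_real (real_of_int (2 * n) * pi) * \<i>" using n by (simp add: algebra_simps)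
    hence "norm ((z - z0) * of_real Lp) = norm (complex_of_real (real_of_int (2 * n) * pi) * \<i>)"
      by (rule arg_cong)
    moreover have "norm ((z - z0) * of_real Lp) = norm (z - z0) * Lp" using assms by (simp add: norm_mult)
    moreover have "norm (complex_of_real (real_of_int (2 * n) * pi) * \<i>) = 2 * \<bar>real_of_int n\<bar> * pi"
      by (simp add: norm_mult abs_mult)
    ultimately have "norm (z - z0) * Lp = 2 * \<bar>real_of_int n\<bar> * pi" by simp
    also have "\<dots> \<ge> 2 * pi" using n1 by simp
    finally have "dist z z0 * Lp \<ge> 2 * pi" by (simp add: dist_norm)
    hence "dist z z0 \<ge> 2 * pi / Lp" using assms by (simp add: field_simps)
    thus False using z by simp
  qed
qed


lemma analytic_part:
  fixes p k :: nat and L :: "(nat \<Rightarrow> int) set"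
  assumes p1: "p > 1" and k0: "0 < k" and kp: "k < p"
    and cnt: "\<And>m. string_count p L (Suc m) = k^m * (p - k)"
    and Ddef: "D = ln (real k) / ln (real p)"
  shows "(\<forall>\<sigma>::real. \<sigma> > D \<longrightarrow> summable (\<lambda>n. norm (geom_zeta_term p L (of_real \<sigma>) n))) \<and>
         (\<forall>\<sigma>::real. \<sigma> < D \<longrightarrow> \<not> summable (\<lambda>n. norm (geom_zeta_term p L (of_real \<sigma>) n))) \<and>
         (\<exists>f. f meromorphic_on UNIV \<and>
              (\<forall>s. Re s > D \<longrightarrow> geom_zeta_term p L s sums f s) \<and>
              {z. is_pole f z} = {complex_of_real D + 2 * pi * \<i> * of_int n / complex_of_real (ln (real p)) | n. True})"
proof -
  define Lp where "Lp = ln (real p)"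
  have Lp: "Lp > 0" unfolding Lp_def using p1 by simp
  define w where "w = (\<lambda>s::complex. exp (- s * of_real Lp))"
  define A where "A = (\<lambda>s. of_nat (p - k) * w s)"
  define B where "B = (\<lambda>s. of_nat k * w s)"
  have tm: "geom_zeta_term p L s (Suc m) = A s * B s ^ m" for s m
  proof -
    have "geom_zeta_term p L s (Suc m) = of_nat (k^m * (p - k)) * w s ^ Suc m"
      unfolding geom_zeta_term_def cnt w_def Lp_def using powr_term[of p "Suc m" s] p1 by simp
    also have "of_nat (k^m * (p - k)) * w s ^ Suc m = (of_nat (p-k) * w s) * (of_nat k * w s)^m"
      by (simp only: of_nat_mult of_nat_power power_mult_distrib power_Suc mult_ac)
    finally show ?thesis unfolding A_def B_def .
  qed
  have t0: "geom_zeta_term p L s 0 = 0" for s by (simp add: geom_zeta_term_def)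
  have nB: "norm (B s) = real k * exp (- Re s * Lp)" for s
    unfolding B_def w_def by (simp add: norm_mult)
  have nA: "norm (A s) = real (p - k) * exp (- Re s * Lp)" for s
    unfolding A_def w_def by (simp add: norm_mult)
  have Apos: "norm (A s) > 0" for s unfolding nA using kp by simp
  have klog: "real k = exp (ln (real k))" using k0 by simp
  have Blt: "norm (B s) < 1" if "Re s > D" for s
  proof -
    have "ln (real k) < Re s * Lp" using that Lp unfolding Ddef Lp_def[symmetric]
      by (simp add: pos_divide_less_eq)
    hence "exp (ln (real k) - Re s * Lp) < 1" by simp
    thus ?thesis unfolding nB using k0 by (simp add: exp_diff exp_minus field_simps)
  qed
  have Bgt: "norm (B s) > 1" if "Re s < D" for s
  proof -
    have "ln (real k) > Re s * Lp" using that Lp unfolding Ddef Lp_def[symmetric]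
      by (simp add: pos_less_divide_eq)
    hence "exp (ln (real k) - Re s * Lp) > 1" by simp
    thus ?thesis unfolding nB using k0 by (simp add: exp_diff exp_minus field_simps)
  qed
  have nterm: "norm (geom_zeta_term p L s (Suc m)) = norm (A s) * norm (B s) ^ m" for s m
    unfolding tm by (simp add: norm_mult norm_power)
  have S1: "\<forall>\<sigma>::real. \<sigma> > D \<longrightarrow> summable (\<lambda>n. norm (geom_zeta_term p L (of_real \<sigma>) n))"
  proof (intro allI impI)
    fix \<sigma> :: real assume "\<sigma> > D"
    hence "norm (B (of_real \<sigma>)) < 1" using Blt by simp
    hence "summable (\<lambda>m. norm (A (of_real \<sigma>)) * norm (B (of_real \<sigma>)) ^ m)"
      by (intro summable_mult summable_geometric) simp
    hence "summable (\<lambda>m. norm (geom_zeta_term p L (of_real \<sigma>) (Suc m)))" unfolding nterm .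
    thus "summable (\<lambda>n. norm (geom_zeta_term p L (of_real \<sigma>) n))"
      using summable_Suc_iff[of "\<lambda>n. norm (geom_zeta_term p L (of_real \<sigma>) n)"] by simp
  qed
  have S2: "\<forall>\<sigma>::real. \<sigma> < D \<longrightarrow> \<not> summable (\<lambda>n. norm (geom_zeta_term p L (of_real \<sigma>) n))"
  proof (intro allI impI notI)
    fix \<sigma> :: real assume "\<sigma> < D" and sm: "summable (\<lambda>n. norm (geom_zeta_term p L (of_real \<sigma>) n))"
    hence B1: "norm (B (of_real \<sigma>)) > 1" using Bgt by simp
    have "summable (\<lambda>m. norm (geom_zeta_term p L (of_real \<sigma>) (Suc m)))" using sm summable_Suc_iff[of "\<lambda>n. norm (geom_zeta_term p L (of_real \<sigma>) n)"] by simp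
    hence lim: "(\<lambda>m. norm (A (of_real \<sigma>)) * norm (B (of_real \<sigma>)) ^ m) \<longlonglongrightarrow> 0"
      unfolding nterm by (rule summable_LIMSEQ_zero)
    have "\<forall>m\<ge>0. norm (A (of_real \<sigma>)) \<le> norm (A (of_real \<sigma>)) * norm (B (of_real \<sigma>)) ^ m"
      using B1 Apos[of "of_real \<sigma>"] by (auto intro!: mult_le_cancel_left1[THEN iffD2] one_le_power)
    hence "norm (A (of_real \<sigma>)) \<le> 0" using LIMSEQ_le_const[OF lim] by blast
    thus False using Apos[of "of_real \<sigma>"] by simp
  qed
  define g where "g = (\<lambda>z::complex. exp (z * of_real Lp) - of_nat k)"
  define f where "f = (\<lambda>z. of_nat (p - k) * inverse (g z))"
  have gan: "g analytic_on S" for S unfolding g_def by (intro analytic_intros)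
  have mero: "f meromorphic_on UNIV" unfolding f_def
    by (intro meromorphic_intros analytic_on_imp_meromorphic_on gan)
  have sums: "geom_zeta_term p L s sums f s" if "Re s > D" for s
  proof -
    have B1: "norm (B s) < 1" using Blt that by simp
    have "(\<lambda>m. A s * B s ^ m) sums (A s * (1 / (1 - B s)))"
      by (intro sums_mult geometric_sums B1)
    hence "(\<lambda>m. geom_zeta_term p L s (Suc m)) sums (A s * (1 / (1 - B s)))" unfolding tm .
    hence "geom_zeta_term p L s sums (A s * (1 / (1 - B s)))" using t0 by (simp add: sums_Suc_iff)
    moreover have "A s * (1 / (1 - B s)) = f s"
    proof -
      define E where "E = exp (s * of_real Lp)"
      have E0: "E \<noteq> 0" unfolding E_def by simp
      have wE: "w s = 1 / E" unfolding w_def E_def by (simp add: exp_minus field_simps)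
      have "B s \<noteq> 1" using B1 by auto
      hence Ek: "E - of_nat k \<noteq> 0" unfolding B_def wE using E0 by (auto simp: field_simps)
      show ?thesis unfolding A_def B_def f_def g_def wE E_def[symmetric] using E0 Ek
        by (simp add: field_simps)
    qed
    ultimately show ?thesis by simp
  qed
  have poles: "{z. is_pole f z} = {complex_of_real D + 2 * pi * \<i> * of_int n / complex_of_real (ln (real p)) | n. True}"
  proof -
    have c0: "(of_nat (p - k) :: complex) \<noteq> 0" using kp by simp
    have "is_pole f z \<longleftrightarrow> g z = 0" for z
    proof -
      have "is_pole f z \<longleftrightarrow> is_pole (\<lambda>z. inverse (g z)) z" unfolding f_def using c0 by simp
      also have "\<dots> \<longleftrightarrow> isolated_zero g z" by (rule is_pole_inverse_iff)
      also have "\<dots> \<longleftrightarrow> g z = 0 \<and> eventually (\<lambda>z. g z \<noteq> 0) (at z)"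
        by (rule isolated_zero_analytic_iff[OF gan])
      also have "\<dots> \<longleftrightarrow> g z = 0" using g_eventually[OF Lp k0, of z] unfolding g_def by blast
      finally show ?thesis .
    qed
    moreover have "g z = 0 \<longleftrightarrow> (\<exists>n::int. z = complex_of_real D + 2 * pi * \<i> * of_int n / complex_of_real (ln (real p)))" for z
      using g_zero_iff[OF Lp k0, of z] unfolding g_def Ddef Lp_def by simp
    ultimately show ?thesis by auto
  qed
  show ?thesis using S1 S2 mero sums poles by blast
qed


theorem theorem4p3:
  fixes p :: nat
  assumes "prime p" and "p > 2"
  shows "\<exists>L. self_similar_padic_string p L \<and>
           (let D = ln ((1 + real p) / 2) / ln (real p) in
             (\<forall>\<sigma>::real. \<sigma> > D \<longrightarrow> summable (\<lambda>n. norm (geom_zeta_term p L (of_real \<sigma>) n))) \<and>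
             (\<forall>\<sigma>::real. \<sigma> < D \<longrightarrow> \<not> summable (\<lambda>n. norm (geom_zeta_term p L (of_real \<sigma>) n))) \<and>
             (\<exists>f. f meromorphic_on UNIV \<and>
                  (\<forall>s. Re s > D \<longrightarrow> geom_zeta_term p L s sums f s) \<and>
                  {z. is_pole f z} = {complex_of_real D + 2 * pi * \<i> * of_int k / complex_of_real (ln (real p)) | k. True}))"
proof -
  have odd: "odd p" using prime_odd_nat assms by blast
  define k where "k = (p + 1) div 2"
  have k2: "2 * k = p + 1" unfolding k_def using odd by presburger
  have kge: "k \<ge> 2" and kp: "k < p" and k0: "0 < k" using k2 assms by linarith+
  have p1: "p > 1" using assms by simp
  define L where "L = Zp p - Kset p k"
  have inv: "zp_invariant_set p 1 {0..<int k} (Kset p k)"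
  proof -
    have "(\<lambda>_. 0) \<in> Kset p k" using p1 k0 by (simp add: Kset_def Zp_def good_def)
    hence ne: "Kset p k \<noteq> {}" by blast
    have sub: "Kset p k \<subseteq> Zp p" unfolding Kset_def by blast
    have eq: "Kset p k = (\<Union>c\<in>{0..<int k}. zp_sim p c 1 ` Kset p k)"
      using K_inv[OF p1, of k] kp by simp
    show ?thesis unfolding zp_invariant_set_def
      using compact_K[OF p1, of k] ne sub eq by blast
  qed
  have ss: "self_similar_padic_string p L"
    unfolding self_similar_padic_string_def
  proof (intro exI conjI allI impI)
    show "(1::nat) \<le> 1" by simp
    show "2 \<le> card {0..<int k}" using kge by simp
    show "zp_invariant_set p 1 {0..<int k} (Kset p k)" by (rule inv)
    fix K' assume "zp_invariant_set p 1 {0..<int k} K'"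
    thus "K' = Kset p k" using K_sub[OF p1 _, of k K'] Kset_sub[OF p1 _, of k K'] kp by auto
  next
    show "L = Zp p - Kset p k" by (simp add: L_def)
  qed
  have D: "ln ((1 + real p) / 2) / ln (real p) = ln (real k) / ln (real p)"
  proof -
    have "(1 + real p) / 2 = real k" using k2 by (simp add: field_simps flip: of_nat_add of_nat_mult)
    thus ?thesis by simp
  qed
  have cnt: "\<And>m. string_count p L (Suc m) = k^m * (p - k)"
    unfolding L_def using string_count_eq[OF p1 k0] kp by simp
  note A = analytic_part[OF p1 k0 kp cnt refl]
  show ?thesis unfolding Let_def D
    by (rule exI[of _ L]) (rule conjI[OF ss A])
qed

end
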